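(* For any POVM $\{\mathcal{M}_i\}_{i\in\mathcal{O}}$ on $\mathcal{H}$, \[K^*(\{\mathcal{M}_i\}_{i\in\mathcal{O}})=\max_{A\subseteq\mathcal{O}}\big[\lambda_{\max}(\mathcal{M}_A)-\lambda_{\min}(\mathcal{M}_A)\big],\qquad \mathcal{M}_A=\sum_{i\in A}\mathcal{M}_i,\] where $\lambda_{\max},\lambda_{\min}$ are the largest and smallest eigenvalues (with $\mathcal{M}_\emptyset=0$). Moreover, if $A^*$ attains the maximum and $|\psi\rangle,|\phi\rangle$ are mutually orthogonal normalized eigenvectors of $\mathcal{M}_{A^*}$ for its largest and smallest eigenvalues respectively, then with $\psi=|\psi\rangle\langle\psi|$, $\phi=|\phi\rangle\langle\phi|$, \[2K^*(\{\mathcal{M}_i\}_{i\in\mathcal{O}})=\sum_{i\in\mathcal{O}}|\mathrm{tr}(\mathcal{M}_i(\psi-\phi))|.\]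
   Context: $\mathcal{H}$ is a finite-dimensional Hilbert space of dimension at least 2, $\mathcal{D}(\mathcal{H})$ its density matrices. A POVM is a finite family $\{\mathcal{M}_i\}_{i\in\mathcal{O}}$ of positive semidefinite matrices with $\sum_i\mathcal{M}_i=I$, and $K^*(\{\mathcal{M}_i\}_{i\in\mathcal{O}})=\max_{\rho,\sigma\in\mathcal{D}(\mathcal{H})}\frac12\sum_{i\in\mathcal{O}}|\mathrm{tr}(\mathcal{M}_i(\rho-\sigma))|$. *)

theory Defs
  imports "Jordan_Normal_Form.Schur_Decomposition"
begin

(* Hilbert space H = C^n; operators are complex n x n matrices (Jordan_Normal_Form). *)

definition mtrace :: "complex mat \<Rightarrow> complex" where
  "mtrace A = (\<Sum>i<dim_row A. A $$ (i, i))"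

definition hermitian :: "complex mat \<Rightarrow> bool" where
  "hermitian A \<longleftrightarrow> mat_adjoint A = A"

definition psd :: "nat \<Rightarrow> complex mat \<Rightarrow> bool" where
  "psd n A \<longleftrightarrow> A \<in> carrier_mat n n \<and> hermitian A \<and>
     (\<forall>v \<in> carrier_vec n. 0 \<le> Re ((A *\<^sub>v v) \<bullet>c v))"

definition density :: "nat \<Rightarrow> complex mat \<Rightarrow> bool" where
  "density n \<rho> \<longleftrightarrow> psd n \<rho> \<and> mtrace \<rho> = 1"

definition msum :: "nat \<Rightarrow> ('i \<Rightarrow> complex mat) \<Rightarrow> 'i set \<Rightarrow> complex mat" where
  "msum n M A = mat n n (\<lambda>(r, c). \<Sum>i\<in>A. M i $$ (r, c))"

definition povm :: "nat \<Rightarrow> 'i set \<Rightarrow> ('i \<Rightarrow> complex mat) \<Rightarrow> bool" where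
  "povm n Out M \<longleftrightarrow> finite Out \<and> (\<forall>i\<in>Out. psd n (M i)) \<and> msum n M Out = 1\<^sub>m n"

definition Kstar :: "nat \<Rightarrow> 'i set \<Rightarrow> ('i \<Rightarrow> complex mat) \<Rightarrow> real" where
  "Kstar n Out M = Sup {(1/2) * (\<Sum>i\<in>Out. cmod (mtrace (M i * (\<rho> - \<sigma>)))) | \<rho> \<sigma>.
      density n \<rho> \<and> density n \<sigma>}"

definition lambda_max :: "complex mat \<Rightarrow> real" where
  "lambda_max A = Max {x. eigenvalue A (complex_of_real x)}"

definition lambda_min :: "complex mat \<Rightarrow> real" where
  "lambda_min A = Min {x. eigenvalue A (complex_of_real x)}"

definition proj :: "complex vec \<Rightarrow> complex mat" where
  "proj v = mat (dim_vec v) (dim_vec v) (\<lambda>(r, c). v $ r * cnj (v $ c))"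

end

theory Submission
  imports Defs
begin

lemma mat_adjoint_alt:
  fixes A :: "complex mat"
  shows "mat_adjoint A = mat (dim_col A) (dim_row A) (\<lambda>(i,j). cnj (A $$ (j,i)))"
  by (rule eq_matI) (auto simp: mat_adjoint_def mat_of_rows_def)

lemma adj_dims[simp]:
  fixes A :: "complex mat"
  shows "dim_row (mat_adjoint A) = dim_col A" "dim_col (mat_adjoint A) = dim_row A"
  by (auto simp: mat_adjoint_alt)

lemma adj_index[simp]:
  fixes A :: "complex mat"
  shows "i < dim_col A \<Longrightarrow> j < dim_row A \<Longrightarrow> mat_adjoint A $$ (i,j) = cnj (A $$ (j,i))"
  by (auto simp: mat_adjoint_alt)

lemma adj_carrier:
  fixes A :: "complex mat"
  shows "A \<in> carrier_mat n m \<Longrightarrow> mat_adjoint A \<in> carrier_mat m n"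
  by (metis adj_dims carrier_matD carrier_matI)

lemma adj_adj[simp]:
  fixes A :: "complex mat"
  shows "mat_adjoint (mat_adjoint A) = A"
  by (rule eq_matI) auto


lemma adj_mult:
  fixes A B :: "complex mat"
  assumes "dim_col A = dim_row B"
  shows "mat_adjoint (A * B) = mat_adjoint B * mat_adjoint A"
proof (rule eq_matI)
  fix i j assume i: "i < dim_row (mat_adjoint B * mat_adjoint A)"
    and j: "j < dim_col (mat_adjoint B * mat_adjoint A)"
  then have i': "i < dim_col B" and j': "j < dim_row A" by auto
  have "mat_adjoint (A * B) $$ (i,j) = cnj (\<Sum>k\<in>{0..<dim_row B}. A $$ (j,k) * B $$ (k,i))"
    using i' j' assms by (simp add: scalar_prod_def)
  also have "\<dots> = (\<Sum>k\<in>{0..<dim_row B}. cnj (B $$ (k,i)) * cnj (A $$ (j,k)))"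
    by (simp add: cnj_sum mult.commute)
  also have "\<dots> = row (mat_adjoint B) i \<bullet> col (mat_adjoint A) j"
    using i' j' assms unfolding scalar_prod_def by (intro sum.cong) auto
  also have "\<dots> = (mat_adjoint B * mat_adjoint A) $$ (i,j)" using i' j' by simp
  finally show "mat_adjoint (A * B) $$ (i,j) = (mat_adjoint B * mat_adjoint A) $$ (i,j)" .
qed simp_all

lemma adj_one[simp]: "mat_adjoint (1\<^sub>m n :: complex mat) = 1\<^sub>m n"
  unfolding mat_adjoint_alt by (rule eq_matI) simp_all

lemma mtrace_comm:
  fixes A B :: "complex mat"
  assumes "A \<in> carrier_mat n m" "B \<in> carrier_mat m n"
  shows "mtrace (A * B) = mtrace (B * A)"
proof -
  have "mtrace (A * B) = (\<Sum>i<n. \<Sum>k<m. A $$ (i,k) * B $$ (k,i))"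
    using assms by (simp add: mtrace_def scalar_prod_def atLeast0LessThan)
  also have "\<dots> = (\<Sum>k<m. \<Sum>i<n. B $$ (k,i) * A $$ (i,k))"
    by (subst sum.swap) (simp add: mult.commute)
  also have "\<dots> = mtrace (B * A)"
    using assms by (simp add: mtrace_def scalar_prod_def atLeast0LessThan)
  finally show ?thesis .
qed


definition blk :: "complex \<Rightarrow> complex mat \<Rightarrow> complex mat" where
  "blk c X = mat (Suc (dim_row X)) (Suc (dim_col X))
     (\<lambda>(i,j). if i = 0 \<and> j = 0 then c else if i = 0 \<or> j = 0 then 0 else X $$ (i - 1, j - 1))"

lemma blk_dims[simp]: "dim_row (blk c X) = Suc (dim_row X)" "dim_col (blk c X) = Suc (dim_col X)"
  by (auto simp: blk_def)

lemma blk_carrier[simp]: "X \<in> carrier_mat n m \<Longrightarrow> blk c X \<in> carrier_mat (Suc n) (Suc m)"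
  by (metis blk_dims carrier_matD carrier_matI)

lemma blk_index:
  "i < Suc (dim_row X) \<Longrightarrow> j < Suc (dim_col X) \<Longrightarrow> blk c X $$ (i,j) =
     (if i = 0 \<and> j = 0 then c else if i = 0 \<or> j = 0 then 0 else X $$ (i - 1, j - 1))"
  by (auto simp: blk_def)

lemma blk_mult:
  assumes "dim_col X = dim_row Y"
  shows "blk c X * blk d Y = blk (c * d) (X * Y)"
proof (rule eq_matI)
  fix i j assume i: "i < dim_row (blk (c * d) (X * Y))" and j: "j < dim_col (blk (c * d) (X * Y))"
  have i': "i < Suc (dim_row X)" and j': "j < Suc (dim_col Y)" using i j by auto
  have "(blk c X * blk d Y) $$ (i,j) = (\<Sum>k<Suc (dim_row Y). blk c X $$ (i,k) * blk d Y $$ (k,j))"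
    using i' j' assms by (simp add: scalar_prod_def atLeast0LessThan)
  also have "\<dots> = blk c X $$ (i,0) * blk d Y $$ (0,j) + (\<Sum>k<dim_row Y. blk c X $$ (i,Suc k) * blk d Y $$ (Suc k,j))"
    by (rule sum.lessThan_Suc_shift)
  also have "\<dots> = blk (c * d) (X * Y) $$ (i,j)"
  proof (cases "i = 0 \<or> j = 0")
    case True
    have "(\<Sum>k<dim_row Y. blk c X $$ (i,Suc k) * blk d Y $$ (Suc k,j)) = 0"
      using True i' j' assms by (intro sum.neutral) (auto simp: blk_index)
    then show ?thesis using True i' j' assms by (simp add: blk_index)
  next
    case False
    then obtain i0 j0 where ij: "i = Suc i0" "j = Suc j0" by (cases i; cases j) auto
    have "(\<Sum>k<dim_row Y. blk c X $$ (i,Suc k) * blk d Y $$ (Suc k,j)) = (\<Sum>k<dim_row Y. X $$ (i0, k) * Y $$ (k, j0))"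
      using i' j' assms ij by (intro sum.cong) (auto simp: blk_index)
    also have "\<dots> = (X * Y) $$ (i0, j0)"
      using i' j' assms ij by (simp add: scalar_prod_def atLeast0LessThan)
    finally show ?thesis using i' j' assms ij by (simp add: blk_index)
  qed
  finally show "(blk c X * blk d Y) $$ (i,j) = blk (c * d) (X * Y) $$ (i,j)" .
next
  show "dim_row (blk c X * blk d Y) = dim_row (blk (c * d) (X * Y))"
    by (simp only: index_mult_mat blk_dims)
next
  show "dim_col (blk c X * blk d Y) = dim_col (blk (c * d) (X * Y))"
    by (simp only: index_mult_mat blk_dims)
qed

lemma blk_adj: "mat_adjoint (blk c X) = blk (cnj c) (mat_adjoint X)"
proof (rule eq_matI)
  fix i j assume "i < dim_row (blk (cnj c) (mat_adjoint X))" "j < dim_col (blk (cnj c) (mat_adjoint X))"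
  then have i: "i < Suc (dim_col X)" and j: "j < Suc (dim_row X)" by simp_all
  show "mat_adjoint (blk c X) $$ (i, j) = blk (cnj c) (mat_adjoint X) $$ (i, j)"
    using i j by (simp add: blk_index)
qed simp_all

lemma blk_one: "blk 1 (1\<^sub>m m) = 1\<^sub>m (Suc m)"
proof (rule eq_matI)
  fix i j assume "i < dim_row (1\<^sub>m (Suc m) :: complex mat)" "j < dim_col (1\<^sub>m (Suc m) :: complex mat)"
  then have i: "i < Suc m" and j: "j < Suc m" by simp_all
  show "blk 1 (1\<^sub>m m) $$ (i, j) = 1\<^sub>m (Suc m) $$ (i, j)"
    using i j by (cases i; cases j) (simp_all add: blk_index)
qed simp_all


lemma cscalar_alt: "(v :: complex vec) \<bullet>c w = (\<Sum>i<dim_vec w. v $ i * cnj (w $ i))"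
  unfolding scalar_prod_def by (simp add: atLeast0LessThan)

lemma cscalar_self: "(w :: complex vec) \<bullet>c w = complex_of_real (\<Sum>i<dim_vec w. (cmod (w $ i))^2)"
  unfolding cscalar_alt of_real_sum by (intro sum.cong refl) (simp add: complex_norm_square[symmetric])

lemma cscalar_self_Re: "Re ((w :: complex vec) \<bullet>c w) \<ge> 0"
  unfolding cscalar_self by (simp add: sum_nonneg)

lemma smult_cscalar:
  assumes "dim_vec v = dim_vec (w :: complex vec)"
  shows "(a \<cdot>\<^sub>v v) \<bullet>c (b \<cdot>\<^sub>v w) = a * cnj b * (v \<bullet>c w)"
  using assms unfolding cscalar_alt sum_distrib_left by (intro sum.cong) (simp_all add: ac_simps)

definition nrm :: "complex vec \<Rightarrow> complex vec" where
  "nrm w = complex_of_real (1 / sqrt (Re (w \<bullet>c w))) \<cdot>\<^sub>v w"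

lemma nrm_carrier[simp]: "w \<in> carrier_vec n \<Longrightarrow> nrm w \<in> carrier_vec n"
  by (simp add: nrm_def)

lemma nrm_dim[simp]: "dim_vec (nrm w) = dim_vec w"
  by (simp add: nrm_def)

lemma nrm_self:
  assumes "w \<bullet>c w \<noteq> 0"
  shows "nrm w \<bullet>c nrm w = 1"
proof -
  define r where "r = (\<Sum>i<dim_vec w. (cmod (w $ i))^2)"
  have wr: "w \<bullet>c w = complex_of_real r" unfolding r_def by (rule cscalar_self)
  have "r \<ge> 0" unfolding r_def by (simp add: sum_nonneg)
  moreover have "r \<noteq> 0" using assms wr by auto
  ultimately have r0: "r > 0" by simp
  have "nrm w \<bullet>c nrm w = complex_of_real (1 / sqrt r) * cnj (complex_of_real (1 / sqrt r)) * complex_of_real r"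
    unfolding nrm_def by (subst smult_cscalar) (simp_all add: wr)
  also have "\<dots> = complex_of_real ((1 / sqrt r) * (1 / sqrt r) * r)"
    by (simp only: complex_cnj_complex_of_real of_real_mult)
  also have "(1 / sqrt r) * (1 / sqrt r) * r = 1" using r0
    by (simp add: field_simps)
  finally show ?thesis by simp
qed

lemma nrm_cscalar:
  assumes "dim_vec v = dim_vec w" "v \<bullet>c w = 0"
  shows "nrm v \<bullet>c nrm w = 0"
  unfolding nrm_def by (subst smult_cscalar) (use assms in simp_all)


lemma mat0_eq: "(A :: complex mat) \<in> carrier_mat 0 0 \<Longrightarrow> B \<in> carrier_mat 0 0 \<Longrightarrow> A = B"
  by (rule eq_matI) (simp_all add: carrier_matD)

lemma spectral:
  fixes A :: "complex mat"
  assumes "A \<in> carrier_mat n n" "mat_adjoint A = A"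
  shows "\<exists>U D. U \<in> carrier_mat n n \<and> D \<in> carrier_mat n n \<and> mat_adjoint U * U = 1\<^sub>m n
     \<and> U * mat_adjoint U = 1\<^sub>m n \<and> (\<forall>i<n. \<forall>j<n. i \<noteq> j \<longrightarrow> D $$ (i,j) = 0)
     \<and> (\<forall>i<n. D $$ (i,i) \<in> \<real>) \<and> A = U * D * mat_adjoint U"
  using assms
proof (induction n arbitrary: A)
  case 0
  have c: "1\<^sub>m 0 * A * mat_adjoint (1\<^sub>m 0) \<in> carrier_mat 0 0" using 0 by simp
  have e: "A = 1\<^sub>m 0 * A * mat_adjoint (1\<^sub>m 0)" by (rule mat0_eq[OF _ c]) (use 0 in simp)
  show ?case
    by (rule exI[of _ "1\<^sub>m 0"], rule exI[of _ A], intro conjI) (use 0 e in simp_all)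
next
  case (Suc m A)
  let ?n = "Suc m"
  have A: "A \<in> carrier_mat ?n ?n" and hA: "mat_adjoint A = A" using Suc.prems by auto
  obtain as where cp: "char_poly A = (\<Prod>a\<leftarrow>as. [:-a,1:])" and las: "length as = ?n"
    using char_poly_factorized[OF A] by auto
  then obtain e as' where as: "as = e # as'" by (cases as) auto
  have eA: "eigenvalue A e" unfolding eigenvalue_root_char_poly[OF A] cp as by simp
  define v0 where "v0 = find_eigenvector A e"
  have ev: "eigenvector A v0 e" using find_eigenvector[OF A eA] v0_def by simp
  hence v0: "v0 \<in> carrier_vec ?n" "v0 \<noteq> 0\<^sub>v ?n" "A *\<^sub>v v0 = e \<cdot>\<^sub>v v0"
    using A unfolding eigenvector_def by auto
  interpret cof_vec_space ?n "TYPE(complex)" .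
  define b where "b = basis_completion v0"
  from basis_completion[OF v0(1) v0(2), folded b_def]
  have dist_b: "distinct b" and indep: "\<not> lin_dep (set b)" and bc: "set b \<subseteq> carrier_vec ?n"
    and hdb: "hd b = v0" and len_b: "length b = ?n" by auto
  define ws0 where "ws0 = gram_schmidt ?n b"
  from gram_schmidt_result[OF bc dist_b indep ws0_def]
  have ws0: "corthogonal ws0" "set ws0 \<subseteq> carrier_vec ?n" "length ws0 = ?n" using len_b by auto
  from len_b hdb obtain vs where bv: "b = v0 # vs" by (cases b) auto
  have hdws: "hd ws0 = v0" using gram_schmidt_hd[OF v0(1), of vs] bv ws0_def by simp
  have ws00: "ws0 ! 0 = v0" using hdws ws0(3) by (cases ws0) auto
  define ws where "ws = map nrm ws0"
  have ws_len: "length ws = ?n" using ws0 by (simp add: ws_def)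
  have ws_car: "\<And>i. i < ?n \<Longrightarrow> ws ! i \<in> carrier_vec ?n"
    using ws0 unfolding ws_def by (metis nth_map nth_mem subsetD nrm_carrier)
  have ws_orth: "\<And>i j. i < ?n \<Longrightarrow> j < ?n \<Longrightarrow> ws ! i \<bullet>c ws ! j = (if i = j then 1 else 0)"
  proof -
    fix i j assume i: "i < ?n" and j: "j < ?n"
    have ci: "ws0 ! i \<in> carrier_vec ?n" "ws0 ! j \<in> carrier_vec ?n" using ws0 i j by auto
    show "ws ! i \<bullet>c ws ! j = (if i = j then 1 else 0)"
    proof (cases "i = j")
      case True
      have "ws0 ! i \<bullet>c ws0 ! i \<noteq> 0" using corthogonalD[OF ws0(1)] i ws0(3) by auto
      then show ?thesis using True i ws0(3) by (simp add: ws_def nrm_self)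
    next
      case False
      have "ws0 ! i \<bullet>c ws0 ! j = 0" using corthogonalD[OF ws0(1)] i j ws0(3) False by auto
      then show ?thesis using False i j ws0(3) ci by (simp add: ws_def nrm_cscalar)
    qed
  qed
  define W where "W = mat_of_cols ?n ws"
  have W: "W \<in> carrier_mat ?n ?n" unfolding W_def using ws_len by (metis mat_of_cols_carrier(1))
  have W': "mat_adjoint W \<in> carrier_mat ?n ?n" using W by (rule adj_carrier)
  have Wij: "\<And>k i. k < ?n \<Longrightarrow> i < ?n \<Longrightarrow> W $$ (k,i) = ws ! i $ k"
    unfolding W_def using ws_len by (simp add: mat_of_cols_index)
  have colW: "\<And>j. j < ?n \<Longrightarrow> col W j = ws ! j"
    unfolding W_def using ws_len ws_car by simp
  have WW: "mat_adjoint W * W = 1\<^sub>m ?n"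
  proof (rule eq_matI)
    fix i j assume "i < dim_row (1\<^sub>m ?n :: complex mat)" "j < dim_col (1\<^sub>m ?n :: complex mat)"
    then have i: "i < ?n" and j: "j < ?n" by simp_all
    have "(mat_adjoint W * W) $$ (i,j) = (\<Sum>k<?n. cnj (W $$ (k,i)) * W $$ (k,j))"
      using i j W by (simp add: scalar_prod_def atLeast0LessThan carrier_matD)
    also have "\<dots> = ws ! j \<bullet>c ws ! i"
      unfolding cscalar_alt using i j ws_car[OF i] by (intro sum.cong) (simp_all add: Wij mult.commute)
    also have "\<dots> = 1\<^sub>m ?n $$ (i,j)" using ws_orth[OF j i] i j by simp
    finally show "(mat_adjoint W * W) $$ (i,j) = 1\<^sub>m ?n $$ (i,j)" .
  qed (use W in \<open>simp_all add: carrier_matD\<close>)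
  have WW': "W * mat_adjoint W = 1\<^sub>m ?n"
    using mat_mult_left_right_inverse[OF adj_carrier[OF W] W WW] .
  define w0 where "w0 = ws ! 0"
  have w0W: "col W 0 = w0" using colW[of 0] w0_def by simp
  have w0c: "w0 \<in> carrier_vec ?n" using ws_car[of 0] w0_def by simp
  have Aw0: "A *\<^sub>v w0 = e \<cdot>\<^sub>v w0"
    unfolding w0_def ws_def using ws0(3) ws00 v0 A
    by (simp add: nrm_def mult_mat_vec smult_smult_assoc mult.commute)
  define A' where "A' = mat_adjoint W * A * W"
  have A': "A' \<in> carrier_mat ?n ?n" unfolding A'_def using A W W' by simp
  have hA': "mat_adjoint A' = A'"
  proof -
    have "mat_adjoint A' = mat_adjoint W * mat_adjoint (mat_adjoint W * A)"
      unfolding A'_def using A W W' by (subst adj_mult) (simp_all add: carrier_matD)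
    also have "\<dots> = mat_adjoint W * (mat_adjoint A * W)"
      using A W W' by (subst adj_mult) (simp_all add: carrier_matD)
    also have "\<dots> = A'" unfolding A'_def hA using A W W' by simp
    finally show ?thesis .
  qed
  have col0: "\<And>i. i < ?n \<Longrightarrow> A' $$ (i,0) = (if i = 0 then e else 0)"
  proof -
    fix i assume i: "i < ?n"
    have "A' = mat_adjoint W * (A * W)" unfolding A'_def using A W W' by simp
    hence "A' $$ (i,0) = row (mat_adjoint W) i \<bullet> col (A * W) 0"
      using i A W W' by (simp add: carrier_matD)
    also have "col (A * W) 0 = e \<cdot>\<^sub>v col W 0"
      unfolding col_mult2[OF A W, of 0, OF zero_less_Suc] w0W by (rule Aw0)
    also have "row (mat_adjoint W) i \<bullet> (e \<cdot>\<^sub>v col W 0) = e * (row (mat_adjoint W) i \<bullet> col W 0)"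
      using W W' i by (intro scalar_prod_smult_distrib[of _ ?n]) (simp_all add: carrier_matD carrier_vecI)
    also have "row (mat_adjoint W) i \<bullet> col W 0 = (mat_adjoint W * W) $$ (i,0)"
      using W W' i by (simp add: carrier_matD)
    also have "\<dots> = (if i = 0 then 1 else 0)" unfolding WW using i by simp
    finally show "A' $$ (i,0) = (if i = 0 then e else 0)" by simp
  qed
  have adjA': "\<And>i j. i < ?n \<Longrightarrow> j < ?n \<Longrightarrow> A' $$ (i,j) = cnj (A' $$ (j,i))"
  proof -
    fix i j assume "i < ?n" "j < ?n"
    then have "mat_adjoint A' $$ (i,j) = cnj (A' $$ (j,i))" using A' by (simp add: carrier_matD)
    then show "A' $$ (i,j) = cnj (A' $$ (j,i))" unfolding hA' .
  qed
  have e_real: "cnj e = e" using adjA'[of 0 0] col0[of 0] by simp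
  have row0: "\<And>j. j < ?n \<Longrightarrow> A' $$ (0,j) = (if j = 0 then e else 0)"
  proof -
    fix j assume j: "j < ?n"
    have "A' $$ (0,j) = cnj (A' $$ (j,0))" using j by (intro adjA') simp_all
    then show "A' $$ (0,j) = (if j = 0 then e else 0)" using col0[OF j] e_real by simp
  qed
  define A3 where "A3 = mat m m (\<lambda>(i,j). A' $$ (Suc i, Suc j))"
  have A3: "A3 \<in> carrier_mat m m" unfolding A3_def by simp
  have hA3: "mat_adjoint A3 = A3"
  proof (rule eq_matI)
    fix i j assume "i < dim_row A3" "j < dim_col A3"
    then have i: "i < m" and j: "j < m" unfolding A3_def by simp_all
    show "mat_adjoint A3 $$ (i,j) = A3 $$ (i,j)"
      using i j adjA'[of "Suc j" "Suc i"] A3 unfolding A3_def by (simp add: carrier_matD)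
  qed (simp_all add: A3_def)
  have A'blk: "A' = blk e A3"
  proof (rule eq_matI)
    fix i j assume "i < dim_row (blk e A3)" "j < dim_col (blk e A3)"
    then have i: "i < ?n" and j: "j < ?n" using A3 by (simp_all add: carrier_matD)
    show "A' $$ (i,j) = blk e A3 $$ (i,j)"
    proof (cases "i = 0 \<or> j = 0")
      case True
      then show ?thesis using i j col0 row0 A3 by (auto simp: blk_index carrier_matD)
    next
      case False
      then obtain i0 j0 where ij: "i = Suc i0" "j = Suc j0" by (cases i; cases j) auto
      then show ?thesis using i j A3 by (simp add: blk_index carrier_matD A3_def)
    qed
  qed (use A' A3 in \<open>simp_all add: carrier_matD\<close>)
  from Suc.IH[OF A3 hA3] obtain U3 D3 where U3: "U3 \<in> carrier_mat m m" and D3: "D3 \<in> carrier_mat m m"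
    and UU3: "mat_adjoint U3 * U3 = 1\<^sub>m m" and D3d: "\<forall>i<m. \<forall>j<m. i \<noteq> j \<longrightarrow> D3 $$ (i,j) = 0"
    and D3r: "\<forall>i<m. D3 $$ (i,i) \<in> \<real>" and A3e: "A3 = U3 * D3 * mat_adjoint U3" by blast
  define V where "V = blk 1 U3"
  define U where "U = W * V"
  define D where "D = blk e D3"
  have V: "V \<in> carrier_mat ?n ?n" unfolding V_def using U3 by simp
  have V': "mat_adjoint V \<in> carrier_mat ?n ?n" using V by (rule adj_carrier)
  have U: "U \<in> carrier_mat ?n ?n" unfolding U_def using V V' W W' by simp
  have D: "D \<in> carrier_mat ?n ?n" unfolding D_def using D3 by simp
  have adjU: "mat_adjoint U = mat_adjoint V * mat_adjoint W"
    unfolding U_def using V V' W W' by (simp add: adj_mult carrier_matD)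
  have VV: "mat_adjoint V * V = 1\<^sub>m ?n"
    unfolding V_def blk_adj using U3 UU3 by (simp add: blk_mult carrier_matD blk_one)
  have UU: "mat_adjoint U * U = 1\<^sub>m ?n"
  proof -
    have WV: "W * V \<in> carrier_mat ?n ?n" using W V by simp
    have "mat_adjoint U * U = (mat_adjoint V * mat_adjoint W) * (W * V)"
      by (subst adjU, unfold U_def, rule refl)
    also have "\<dots> = mat_adjoint V * (mat_adjoint W * (W * V))"
      by (rule assoc_mult_mat[OF V' W' WV])
    also have "mat_adjoint W * (W * V) = (mat_adjoint W * W) * V"
      by (rule assoc_mult_mat[OF W' W V, symmetric])
    finally have "mat_adjoint U * U = mat_adjoint V * ((mat_adjoint W * W) * V)" .
    also have "\<dots> = 1\<^sub>m ?n" unfolding WW using V V' VV by simp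
    finally show ?thesis .
  qed
  have UU': "U * mat_adjoint U = 1\<^sub>m ?n"
    using mat_mult_left_right_inverse[OF adj_carrier[OF U] U UU] .
  have VDV: "V * D * mat_adjoint V = A'"
    unfolding V_def D_def blk_adj A'blk A3e using U3 D3
    by (simp add: blk_mult carrier_matD)
  have AWA: "A = W * A' * mat_adjoint W"
  proof -
    have WA: "mat_adjoint W * A \<in> carrier_mat ?n ?n" using W' A by simp
    have WWA: "W * (mat_adjoint W * A) \<in> carrier_mat ?n ?n" using W WA by simp
    have "A = (W * mat_adjoint W) * A * (W * mat_adjoint W)" unfolding WW' using A by simp
    also have "(W * mat_adjoint W) * A = W * (mat_adjoint W * A)" by (rule assoc_mult_mat[OF W W' A])
    also have "W * (mat_adjoint W * A) * (W * mat_adjoint W) = (W * (mat_adjoint W * A) * W) * mat_adjoint W"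
      by (rule assoc_mult_mat[OF WWA W W', symmetric])
    also have "W * (mat_adjoint W * A) * W = W * (mat_adjoint W * A * W)" by (rule assoc_mult_mat[OF W WA W])
    finally show ?thesis unfolding A'_def .
  qed
  have AU: "A = U * D * mat_adjoint U"
  proof -
    have VD: "V * D \<in> carrier_mat ?n ?n" using V D by simp
    have "U * D * mat_adjoint U = ((W * V) * D) * (mat_adjoint V * mat_adjoint W)"
      by (subst adjU, unfold U_def, rule refl)
    also have "(W * V) * D = W * (V * D)" by (rule assoc_mult_mat[OF W V D])
    also have "W * (V * D) * (mat_adjoint V * mat_adjoint W) = W * ((V * D) * (mat_adjoint V * mat_adjoint W))"
      by (rule assoc_mult_mat[OF W VD mult_carrier_mat[OF V' W']])
    also have "(V * D) * (mat_adjoint V * mat_adjoint W) = ((V * D) * mat_adjoint V) * mat_adjoint W"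
      by (rule assoc_mult_mat[OF VD V' W', symmetric])
    also have "W * (((V * D) * mat_adjoint V) * mat_adjoint W) = W * ((V * D) * mat_adjoint V) * mat_adjoint W"
      by (rule assoc_mult_mat[OF W mult_carrier_mat[OF VD V'] W', symmetric])
    finally have "U * D * mat_adjoint U = W * (V * D * mat_adjoint V) * mat_adjoint W" .
    then show ?thesis unfolding VDV using AWA by simp
  qed
  have Dd: "\<forall>i<?n. \<forall>j<?n. i \<noteq> j \<longrightarrow> D $$ (i,j) = 0"
  proof (intro allI impI)
    fix i j assume i: "i < ?n" and j: "j < ?n" and ij: "i \<noteq> j"
    show "D $$ (i,j) = 0"
    proof (cases "i = 0 \<or> j = 0")
      case True
      then show ?thesis using i j ij D3 by (auto simp: D_def blk_index carrier_matD)
    next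
      case False
      then obtain i0 j0 where "i = Suc i0" "j = Suc j0" by (cases i; cases j) auto
      then show ?thesis using i j ij D3 D3d by (simp add: D_def blk_index carrier_matD)
    qed
  qed
  have Dr: "\<forall>i<?n. D $$ (i,i) \<in> \<real>"
  proof (intro allI impI)
    fix i assume i: "i < ?n"
    show "D $$ (i,i) \<in> \<real>"
    proof (cases i)
      case 0
      then show ?thesis using D3 e_real by (simp add: D_def blk_index carrier_matD Reals_cnj_iff)
    next
      case (Suc i0)
      then show ?thesis using i D3 D3r by (simp add: D_def blk_index carrier_matD)
    qed
  qed
  show ?case
    by (rule exI[of _ U], rule exI[of _ D], intro conjI) (use U D UU UU' Dd Dr AU in simp_all)
qed


lemma mtrace_adj:
  fixes A :: "complex mat"
  assumes "A \<in> carrier_mat n n"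
  shows "cnj (mtrace A) = mtrace (mat_adjoint A)"
  using assms unfolding mtrace_def by (simp add: carrier_matD)

lemma mtrace_real:
  fixes X Y :: "complex mat"
  assumes X: "X \<in> carrier_mat n n" and Y: "Y \<in> carrier_mat n n"
    and hX: "mat_adjoint X = X" and hY: "mat_adjoint Y = Y"
  shows "cnj (mtrace (X * Y)) = mtrace (X * Y)"
proof -
  have "cnj (mtrace (X * Y)) = mtrace (mat_adjoint (X * Y))"
    using X Y by (intro mtrace_adj[of _ n]) simp
  also have "mat_adjoint (X * Y) = Y * X"
    using X Y hX hY by (subst adj_mult) (simp_all add: carrier_matD)
  also have "mtrace (Y * X) = mtrace (X * Y)" using mtrace_comm[OF Y X] .
  finally show ?thesis .
qed

lemma mtrace_minus:
  fixes X Y :: "complex mat"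
  assumes X: "X \<in> carrier_mat n n" and Y: "Y \<in> carrier_mat n n"
  shows "mtrace (X - Y) = mtrace X - mtrace Y"
  using assms unfolding mtrace_def by (simp add: carrier_matD sum_subtractf)

lemma mtrace_mult_minus:
  fixes X R S :: "complex mat"
  assumes X: "X \<in> carrier_mat n n" and R: "R \<in> carrier_mat n n" and S: "S \<in> carrier_mat n n"
  shows "mtrace (X * (R - S)) = mtrace (X * R) - mtrace (X * S)"
proof -
  have "X * (R - S) = X * R - X * S" by (rule mult_minus_distrib_mat[OF X R S])
  then show ?thesis using X R S by (simp add: mtrace_minus[of _ n])
qed

lemma msum_carrier[simp]: "msum n M A \<in> carrier_mat n n"
  by (simp add: msum_def)

lemma msum_herm:
  assumes "\<And>i. i \<in> A \<Longrightarrow> M i \<in> carrier_mat n n \<and> mat_adjoint (M i) = M i"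
  shows "mat_adjoint (msum n M A) = msum n M A"
proof (rule eq_matI)
  fix r c assume "r < dim_row (msum n M A)" "c < dim_col (msum n M A)"
  then have r: "r < n" and c: "c < n" by (simp_all add: msum_def)
  have "mat_adjoint (msum n M A) $$ (r,c) = (\<Sum>i\<in>A. cnj (M i $$ (c,r)))"
    using r c by (simp add: msum_def)
  also have "\<dots> = (\<Sum>i\<in>A. M i $$ (r,c))"
  proof (intro sum.cong refl)
    fix i assume i: "i \<in> A"
    have Mi: "M i \<in> carrier_mat n n" and h: "mat_adjoint (M i) = M i" using assms[OF i] by auto
    have "mat_adjoint (M i) $$ (r,c) = cnj (M i $$ (c,r))"
      using Mi r c by (intro adj_index) (simp_all add: carrier_matD)
    then show "cnj (M i $$ (c,r)) = M i $$ (r,c)" unfolding h by simp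
  qed
  also have "\<dots> = msum n M A $$ (r,c)" using r c by (simp add: msum_def)
  finally show "mat_adjoint (msum n M A) $$ (r,c) = msum n M A $$ (r,c)" .
qed (simp_all add: msum_def)

lemma mtrace_msum:
  assumes fin: "finite A" and MA: "\<And>i. i \<in> A \<Longrightarrow> M i \<in> carrier_mat n n"
    and X: "X \<in> carrier_mat n n"
  shows "mtrace (msum n M A * X) = (\<Sum>i\<in>A. mtrace (M i * X))"
proof -
  have "mtrace (msum n M A * X) = (\<Sum>r<n. \<Sum>k<n. (\<Sum>i\<in>A. M i $$ (r,k)) * X $$ (k,r))"
    using X by (simp add: mtrace_def msum_def scalar_prod_def atLeast0LessThan carrier_matD)
  also have "\<dots> = (\<Sum>r<n. \<Sum>k<n. \<Sum>i\<in>A. M i $$ (r,k) * X $$ (k,r))"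
    by (simp add: sum_distrib_right)
  also have "\<dots> = (\<Sum>i\<in>A. \<Sum>r<n. \<Sum>k<n. M i $$ (r,k) * X $$ (k,r))"
    by (simp add: sum.swap[of _ A])
  also have "\<dots> = (\<Sum>i\<in>A. mtrace (M i * X))"
  proof (intro sum.cong refl)
    fix i assume "i \<in> A"
    then have Mi: "M i \<in> carrier_mat n n" by (rule MA)
    then show "(\<Sum>r<n. \<Sum>k<n. M i $$ (r,k) * X $$ (k,r)) = mtrace (M i * X)"
      using X by (simp add: mtrace_def scalar_prod_def atLeast0LessThan carrier_matD)
  qed
  finally show ?thesis .
qed

lemma row_adj:
  fixes U :: "complex mat"
  assumes "i < dim_col U" "dim_vec w = dim_row U"
  shows "row (mat_adjoint U) i \<bullet> w = w \<bullet>c col U i"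
  using assms unfolding cscalar_alt scalar_prod_def
  by (simp add: atLeast0LessThan mult.commute)

lemma mtrace_diag:
  fixes X D :: "complex mat"
  assumes X: "X \<in> carrier_mat n n" and D: "D \<in> carrier_mat n n"
    and Dd: "\<forall>i<n. \<forall>j<n. i \<noteq> j \<longrightarrow> D $$ (i,j) = 0"
  shows "mtrace (X * D) = (\<Sum>i<n. X $$ (i,i) * D $$ (i,i))"
proof -
  have "mtrace (X * D) = (\<Sum>i<n. \<Sum>j<n. X $$ (i,j) * D $$ (j,i))"
    using X D by (simp add: mtrace_def scalar_prod_def atLeast0LessThan carrier_matD)
  also have "\<dots> = (\<Sum>i<n. \<Sum>j<n. if j = i then X $$ (i,i) * D $$ (i,i) else 0)"
    using Dd by (intro sum.cong refl) auto
  also have "\<dots> = (\<Sum>i<n. X $$ (i,i) * D $$ (i,i))" by simp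
  finally show ?thesis .
qed


lemma col_mult_diag:
  fixes U D :: "complex mat"
  assumes U: "U \<in> carrier_mat n n" and D: "D \<in> carrier_mat n n"
    and Dd: "\<forall>i<n. \<forall>j<n. i \<noteq> j \<longrightarrow> D $$ (i,j) = 0" and i: "i < n"
  shows "col (U * D) i = D $$ (i,i) \<cdot>\<^sub>v col U i"
proof (rule eq_vecI)
  fix k assume "k < dim_vec (D $$ (i,i) \<cdot>\<^sub>v col U i)"
  then have k: "k < n" using U by (simp add: carrier_matD)
  have "col (U * D) i $ k = (\<Sum>j<n. U $$ (k,j) * D $$ (j,i))"
    using U D i k by (simp add: scalar_prod_def atLeast0LessThan carrier_matD)
  also have "\<dots> = (\<Sum>j<n. if j = i then U $$ (k,i) * D $$ (i,i) else 0)"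
    using Dd i by (intro sum.cong refl) auto
  also have "\<dots> = (D $$ (i,i) \<cdot>\<^sub>v col U i) $ k" using U i k by (simp add: carrier_matD)
  finally show "col (U * D) i $ k = (D $$ (i,i) \<cdot>\<^sub>v col U i) $ k" .
qed (use U D in \<open>simp add: carrier_matD\<close>)

lemma char_poly_nz:
  assumes "(M :: complex mat) \<in> carrier_mat n n"
  shows "char_poly M \<noteq> 0"
  using degree_monic_char_poly[OF assms] by auto

lemma eig_finite:
  assumes M: "(M :: complex mat) \<in> carrier_mat n n"
  shows "finite {x. eigenvalue M (complex_of_real x)}"
proof -
  have "{x. eigenvalue M (complex_of_real x)} \<subseteq> Re ` {z. poly (char_poly M) z = 0}"
  proof
    fix x assume "x \<in> {x. eigenvalue M (complex_of_real x)}"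
    then have "poly (char_poly M) (complex_of_real x) = 0"
      using eigenvalue_root_char_poly[OF M] by simp
    then show "x \<in> Re ` {z. poly (char_poly M) z = 0}" by (intro image_eqI[of _ _ "complex_of_real x"]) simp_all
  qed
  moreover have "finite (Re ` {z. poly (char_poly M) z = 0})"
    using poly_roots_finite[OF char_poly_nz[OF M]] by simp
  ultimately show ?thesis by (rule finite_subset)
qed

lemma herm_eig:
  fixes M :: "complex mat"
  assumes M: "M \<in> carrier_mat n n" and hM: "mat_adjoint M = M" and n: "n \<ge> 1"
  shows "{x. eigenvalue M (complex_of_real x)} \<noteq> {}"
    and "\<And>\<rho>. psd n \<rho> \<Longrightarrow> mtrace \<rho> = 1 \<Longrightarrow>
          lambda_min M \<le> Re (mtrace (M * \<rho>)) \<and> Re (mtrace (M * \<rho>)) \<le> lambda_max M"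
proof -
  define S where "S = {x. eigenvalue M (complex_of_real x)}"
  have fin: "finite S" unfolding S_def by (rule eig_finite[OF M])
  obtain U D where U: "U \<in> carrier_mat n n" and D: "D \<in> carrier_mat n n"
    and UU: "mat_adjoint U * U = 1\<^sub>m n" and UU': "U * mat_adjoint U = 1\<^sub>m n"
    and Dd: "\<forall>i<n. \<forall>j<n. i \<noteq> j \<longrightarrow> D $$ (i,j) = 0" and Dr: "\<forall>i<n. D $$ (i,i) \<in> \<real>"
    and MU: "M = U * D * mat_adjoint U"
    using spectral[OF M hM] by blast
  have U': "mat_adjoint U \<in> carrier_mat n n" using U by (rule adj_carrier)
  have UD: "U * D \<in> carrier_mat n n" using U D by simp
  have MUD: "M * U = U * D"
  proof -
    have "M * U = (U * D) * (mat_adjoint U * U)" unfolding MU by (rule assoc_mult_mat[OF UD U' U])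
    then show ?thesis unfolding UU using right_mult_one_mat[OF UD] by simp
  qed
  have Dii: "\<And>i. i < n \<Longrightarrow> D $$ (i,i) = complex_of_real (Re (D $$ (i,i)))"
    using Dr by (simp add: complex_is_Real_iff)
  have dS: "\<And>i. i < n \<Longrightarrow> Re (D $$ (i,i)) \<in> S"
  proof -
    fix i assume i: "i < n"
    let ?u = "col U i"
    have uc: "?u \<in> carrier_vec n" using U i by (simp add: carrier_matD carrier_vecI)
    have "M *\<^sub>v ?u = col (M * U) i" by (rule col_mult2[OF M U i, symmetric])
    also have "\<dots> = D $$ (i,i) \<cdot>\<^sub>v ?u" unfolding MUD by (rule col_mult_diag[OF U D Dd i])
    finally have Mu: "M *\<^sub>v ?u = complex_of_real (Re (D $$ (i,i))) \<cdot>\<^sub>v ?u" using Dii[OF i] by simp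
    have "?u \<bullet>c ?u = (mat_adjoint U * U) $$ (i,i)"
      using U U' i by (simp add: row_adj carrier_matD)
    also have "\<dots> = 1" unfolding UU using i by simp
    finally have "?u \<noteq> 0\<^sub>v n" by auto
    then have "eigenvector M ?u (complex_of_real (Re (D $$ (i,i))))"
      unfolding eigenvector_def using uc Mu M by (simp add: carrier_matD)
    then show "Re (D $$ (i,i)) \<in> S" unfolding S_def eigenvalue_def by auto
  qed
  show "{x. eigenvalue M (complex_of_real x)} \<noteq> {}" using dS[of 0] n unfolding S_def by auto
  fix \<rho> assume psd: "psd n \<rho>" and tr: "mtrace \<rho> = 1"
  have R: "\<rho> \<in> carrier_mat n n" using psd unfolding psd_def by simp
  define X where "X = mat_adjoint U * (\<rho> * U)"
  have RU: "\<rho> * U \<in> carrier_mat n n" using R U by simp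
  have X: "X \<in> carrier_mat n n" unfolding X_def using U' RU by simp
  have UR: "mat_adjoint U * \<rho> \<in> carrier_mat n n" using U' R by simp
  have "mtrace (M * \<rho>) = mtrace ((U * D) * (mat_adjoint U * \<rho>))"
    unfolding MU by (subst assoc_mult_mat[OF UD U' R]) simp
  also have "\<dots> = mtrace ((mat_adjoint U * \<rho>) * (U * D))" by (rule mtrace_comm[OF UD UR])
  also have "(mat_adjoint U * \<rho>) * (U * D) = ((mat_adjoint U * \<rho>) * U) * D"
    by (rule assoc_mult_mat[OF UR U D, symmetric])
  also have "(mat_adjoint U * \<rho>) * U = X" unfolding X_def by (rule assoc_mult_mat[OF U' R U])
  also have "mtrace (X * D) = (\<Sum>i<n. X $$ (i,i) * D $$ (i,i))" by (rule mtrace_diag[OF X D Dd])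
  finally have trMR: "mtrace (M * \<rho>) = (\<Sum>i<n. X $$ (i,i) * D $$ (i,i))" .
  have Xii: "\<And>i. i < n \<Longrightarrow> X $$ (i,i) = (\<rho> *\<^sub>v col U i) \<bullet>c col U i"
  proof -
    fix i assume i: "i < n"
    have "X $$ (i,i) = row (mat_adjoint U) i \<bullet> col (\<rho> * U) i"
      unfolding X_def using U U' RU i by (simp add: carrier_matD)
    also have "col (\<rho> * U) i = \<rho> *\<^sub>v col U i" by (rule col_mult2[OF R U i])
    also have "row (mat_adjoint U) i \<bullet> (\<rho> *\<^sub>v col U i) = (\<rho> *\<^sub>v col U i) \<bullet>c col U i"
      using U R i by (intro row_adj) (simp_all add: carrier_matD)
    finally show "X $$ (i,i) = (\<rho> *\<^sub>v col U i) \<bullet>c col U i" .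
  qed
  have Xpos: "\<And>i. i < n \<Longrightarrow> Re (X $$ (i,i)) \<ge> 0"
  proof -
    fix i assume i: "i < n"
    have "col U i \<in> carrier_vec n" using U i by (simp add: carrier_matD carrier_vecI)
    then show "Re (X $$ (i,i)) \<ge> 0" using psd Xii[OF i] unfolding psd_def by simp
  qed
  have "mtrace X = mtrace ((\<rho> * U) * mat_adjoint U)" unfolding X_def by (rule mtrace_comm[OF U' RU])
  also have "(\<rho> * U) * mat_adjoint U = \<rho> * (U * mat_adjoint U)" by (rule assoc_mult_mat[OF R U U'])
  also have "\<dots> = \<rho>" unfolding UU' using right_mult_one_mat[OF R] by simp
  finally have trX: "mtrace X = 1" using tr by simp
  have sumX: "(\<Sum>i<n. Re (X $$ (i,i))) = 1"
  proof -
    have "(\<Sum>i<n. Re (X $$ (i,i))) = Re (mtrace X)" unfolding mtrace_def using X by (simp add: carrier_matD)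
    then show ?thesis using trX by simp
  qed
  have Re_tr: "Re (mtrace (M * \<rho>)) = (\<Sum>i<n. Re (X $$ (i,i)) * Re (D $$ (i,i)))"
  proof -
    have "Re (mtrace (M * \<rho>)) = (\<Sum>i<n. Re (X $$ (i,i) * D $$ (i,i)))" unfolding trMR by simp
    also have "\<dots> = (\<Sum>i<n. Re (X $$ (i,i)) * Re (D $$ (i,i)))"
    proof (intro sum.cong refl)
      fix i assume "i \<in> {..<n}"
      then have e: "D $$ (i,i) = complex_of_real (Re (D $$ (i,i)))" using Dii by simp
      show "Re (X $$ (i,i) * D $$ (i,i)) = Re (X $$ (i,i)) * Re (D $$ (i,i))"
        by (subst (1) e) simp
    qed
    finally show ?thesis .
  qed
  have "Re (mtrace (M * \<rho>)) \<le> (\<Sum>i<n. Re (X $$ (i,i)) * lambda_max M)"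
    unfolding Re_tr
  proof (intro sum_mono mult_left_mono)
    fix i assume "i \<in> {..<n}"
    then show "Re (D $$ (i,i)) \<le> lambda_max M" "0 \<le> Re (X $$ (i,i))"
      using dS fin Xpos unfolding lambda_max_def S_def by auto
  qed
  also have "\<dots> = lambda_max M" using sumX by (simp add: sum_distrib_right[symmetric])
  finally have up: "Re (mtrace (M * \<rho>)) \<le> lambda_max M" .
  have "(\<Sum>i<n. Re (X $$ (i,i)) * lambda_min M) \<le> Re (mtrace (M * \<rho>))"
    unfolding Re_tr
  proof (intro sum_mono mult_left_mono)
    fix i assume "i \<in> {..<n}"
    then show "lambda_min M \<le> Re (D $$ (i,i))" "0 \<le> Re (X $$ (i,i))"
      using dS fin Xpos unfolding lambda_min_def S_def by auto
  qed
  moreover have "(\<Sum>i<n. Re (X $$ (i,i)) * lambda_min M) = lambda_min M"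
    using sumX by (simp add: sum_distrib_right[symmetric])
  ultimately show "lambda_min M \<le> Re (mtrace (M * \<rho>)) \<and> Re (mtrace (M * \<rho>)) \<le> lambda_max M"
    using up by simp
qed


lemma smult_cscalar_left:
  "dim_vec v = dim_vec (w :: complex vec) \<Longrightarrow> (a \<cdot>\<^sub>v v) \<bullet>c w = a * (v \<bullet>c w)"
  unfolding cscalar_alt sum_distrib_left by (intro sum.cong) (simp_all add: ac_simps)

lemma cscalar_swap: "dim_vec v = dim_vec (w :: complex vec) \<Longrightarrow> w \<bullet>c v = cnj (v \<bullet>c w)"
  unfolding cscalar_alt by (simp add: mult.commute)

lemma proj_carrier: "\<psi> \<in> carrier_vec n \<Longrightarrow> proj \<psi> \<in> carrier_mat n n"
  unfolding proj_def by (simp add: carrier_vecD)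

lemma proj_density:
  assumes psi: "\<psi> \<in> carrier_vec n" and nrm1: "\<psi> \<bullet>c \<psi> = 1"
  shows "density n (proj \<psi>)"
proof -
  have dim: "dim_vec \<psi> = n" using psi by (simp add: carrier_vecD)
  have P: "proj \<psi> \<in> carrier_mat n n" by (rule proj_carrier[OF psi])
  have herm: "mat_adjoint (proj \<psi>) = proj \<psi>"
    by (rule eq_matI) (simp_all add: proj_def dim mult.commute)
  have Pv: "\<And>v :: complex vec. v \<in> carrier_vec n \<Longrightarrow> proj \<psi> *\<^sub>v v = (v \<bullet>c \<psi>) \<cdot>\<^sub>v \<psi>"
  proof -
    fix v :: "complex vec" assume v: "v \<in> carrier_vec n"
    show "proj \<psi> *\<^sub>v v = (v \<bullet>c \<psi>) \<cdot>\<^sub>v \<psi>"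
    proof (rule eq_vecI)
      fix r assume "r < dim_vec ((v \<bullet>c \<psi>) \<cdot>\<^sub>v \<psi>)"
      then have r: "r < n" using dim by simp
      have "(proj \<psi> *\<^sub>v v) $ r = (\<Sum>c<n. \<psi> $ r * cnj (\<psi> $ c) * v $ c)"
        using r v dim by (simp add: proj_def scalar_prod_def atLeast0LessThan carrier_vecD)
      also have "\<dots> = \<psi> $ r * (\<Sum>c<n. v $ c * cnj (\<psi> $ c))"
        by (simp add: sum_distrib_left ac_simps)
      also have "\<dots> = ((v \<bullet>c \<psi>) \<cdot>\<^sub>v \<psi>) $ r" using r dim by (simp add: cscalar_alt mult.commute)
      finally show "(proj \<psi> *\<^sub>v v) $ r = ((v \<bullet>c \<psi>) \<cdot>\<^sub>v \<psi>) $ r" .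
    qed (use v dim in \<open>simp add: proj_def carrier_vecD\<close>)
  qed
  have pos: "\<forall>v \<in> carrier_vec n. 0 \<le> Re ((proj \<psi> *\<^sub>v v) \<bullet>c v)"
  proof
    fix v :: "complex vec" assume v: "v \<in> carrier_vec n"
    have dv: "dim_vec v = n" using v by (simp add: carrier_vecD)
    have "(proj \<psi> *\<^sub>v v) \<bullet>c v = (v \<bullet>c \<psi>) * (\<psi> \<bullet>c v)"
      unfolding Pv[OF v] using dim dv by (simp add: smult_cscalar_left)
    also have "\<dots> = (v \<bullet>c \<psi>) * cnj (v \<bullet>c \<psi>)" using dim dv by (subst cscalar_swap[of v \<psi>]) simp_all
    finally have "(proj \<psi> *\<^sub>v v) \<bullet>c v = complex_of_real ((cmod (v \<bullet>c \<psi>))^2)"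
      by (simp add: complex_norm_square[symmetric])
    then show "0 \<le> Re ((proj \<psi> *\<^sub>v v) \<bullet>c v)" by simp
  qed
  have tr: "mtrace (proj \<psi>) = 1"
    using nrm1 dim unfolding mtrace_def cscalar_alt by (simp add: proj_def)
  show ?thesis unfolding density_def psd_def hermitian_def using P herm pos tr by simp
qed

lemma eig_trace:
  fixes M :: "complex mat"
  assumes M: "M \<in> carrier_mat n n" and ev: "eigenvector M \<psi> l" and nrm1: "\<psi> \<bullet>c \<psi> = 1"
  shows "mtrace (M * proj \<psi>) = l"
proof -
  have psi: "\<psi> \<in> carrier_vec n" and Mpsi: "M *\<^sub>v \<psi> = l \<cdot>\<^sub>v \<psi>"
    using ev M unfolding eigenvector_def by (auto simp: carrier_matD)
  have dim: "dim_vec \<psi> = n" using psi by (simp add: carrier_vecD)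
  have "mtrace (M * proj \<psi>) = (\<Sum>i<n. (M *\<^sub>v \<psi>) $ i * cnj (\<psi> $ i))"
    unfolding mtrace_def
  proof (intro sum.cong)
    show "{..<dim_row (M * proj \<psi>)} = {..<n}" using M by (simp add: carrier_matD)
    fix i assume "i \<in> {..<n}"
    then have i: "i < n" by simp
    have "(M * proj \<psi>) $$ (i,i) = (\<Sum>k<n. M $$ (i,k) * (\<psi> $ k * cnj (\<psi> $ i)))"
      using M i dim by (simp add: proj_def scalar_prod_def atLeast0LessThan carrier_matD)
    also have "\<dots> = (\<Sum>k<n. M $$ (i,k) * \<psi> $ k) * cnj (\<psi> $ i)"
      unfolding sum_distrib_right by (intro sum.cong) (simp_all add: ac_simps)
    also have "\<dots> = (M *\<^sub>v \<psi>) $ i * cnj (\<psi> $ i)"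
      using M i dim by (simp add: scalar_prod_def atLeast0LessThan carrier_matD)
    finally show "(M * proj \<psi>) $$ (i,i) = (M *\<^sub>v \<psi>) $ i * cnj (\<psi> $ i)" .
  qed
  also have "\<dots> = (M *\<^sub>v \<psi>) \<bullet>c \<psi>" unfolding cscalar_alt dim ..
  also have "\<dots> = l * (\<psi> \<bullet>c \<psi>)" unfolding Mpsi by (rule smult_cscalar_left) simp
  finally show ?thesis using nrm1 by simp
qed

lemma eig_unit:
  fixes M :: "complex mat"
  assumes M: "M \<in> carrier_mat n n" and ev: "eigenvalue M l"
  shows "\<exists>\<psi>. \<psi> \<in> carrier_vec n \<and> \<psi> \<bullet>c \<psi> = 1 \<and> eigenvector M \<psi> l"
proof -
  obtain v where v: "eigenvector M v l" using ev unfolding eigenvalue_def by auto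
  then have vc: "v \<in> carrier_vec n" and v0: "v \<noteq> 0\<^sub>v n" and Mv: "M *\<^sub>v v = l \<cdot>\<^sub>v v"
    using M unfolding eigenvector_def by (auto simp: carrier_matD)
  have dim: "dim_vec v = n" using vc by (simp add: carrier_vecD)
  have vv: "v \<bullet>c v \<noteq> 0"
  proof
    assume "v \<bullet>c v = 0"
    then have "complex_of_real (\<Sum>i<dim_vec v. (cmod (v $ i))^2) = 0" using cscalar_self[of v] by simp
    then have "(\<Sum>i<n. (cmod (v $ i))^2) = 0" unfolding dim of_real_eq_0_iff .
    then have "\<forall>i\<in>{..<n}. (cmod (v $ i))^2 = 0" by (subst (asm) sum_nonneg_eq_0_iff) simp_all
    then have "v = 0\<^sub>v n" using dim by (intro eq_vecI) auto
    then show False using v0 by simp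
  qed
  define c where "c = complex_of_real (1 / sqrt (Re (v \<bullet>c v)))"
  have nv: "nrm v = c \<cdot>\<^sub>v v" unfolding nrm_def c_def ..
  have c0: "c \<noteq> 0"
  proof -
    have "Re (v \<bullet>c v) \<noteq> 0"
    proof
      assume "Re (v \<bullet>c v) = 0"
      then have "v \<bullet>c v = 0" using cscalar_self[of v] by (metis Re_complex_of_real of_real_0)
      then show False using vv by simp
    qed
    moreover have "Re (v \<bullet>c v) \<ge> 0" by (rule cscalar_self_Re)
    ultimately show ?thesis unfolding c_def by simp
  qed
  have "nrm v \<noteq> 0\<^sub>v n"
  proof
    assume "nrm v = 0\<^sub>v n"
    then have "nrm v \<bullet>c nrm v = 0" by (simp add: cscalar_alt)
    then show False using nrm_self[OF vv] by simp
  qed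
  moreover have "M *\<^sub>v nrm v = l \<cdot>\<^sub>v nrm v"
    unfolding nv using mult_mat_vec[OF M vc] Mv by (simp add: smult_smult_assoc mult.commute)
  ultimately have "eigenvector M (nrm v) l"
    unfolding eigenvector_def using vc M by (simp add: carrier_matD)
  then show ?thesis using vc nrm_self[OF vv] by (intro exI[of _ "nrm v"]) simp
qed


lemma real_of_cnj: "cnj (z::complex) = z \<Longrightarrow> z = complex_of_real (Re z)"
  by (simp add: complex_eq_iff)

lemma povm_key:
  fixes M :: "'i \<Rightarrow> complex mat"
  assumes P: "povm n Out M" and n: "n \<ge> 1" and R: "density n \<rho>" and S: "density n \<sigma>"
  shows "(\<Sum>i\<in>Out. cmod (mtrace (M i * (\<rho> - \<sigma>))))
           \<le> 2 * Max ((\<lambda>A. lambda_max (msum n M A) - lambda_min (msum n M A)) ` Pow Out)"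
    and "\<And>A. A \<subseteq> Out \<Longrightarrow> 2 * (Re (mtrace (msum n M A * \<rho>)) - Re (mtrace (msum n M A * \<sigma>)))
           \<le> (\<Sum>i\<in>Out. cmod (mtrace (M i * (\<rho> - \<sigma>))))"
proof -
  have fin: "finite Out" and Mpsd: "\<And>i. i \<in> Out \<Longrightarrow> psd n (M i)" and Msum: "msum n M Out = 1\<^sub>m n"
    using P unfolding povm_def by auto
  have Mc: "\<And>i. i \<in> Out \<Longrightarrow> M i \<in> carrier_mat n n" and Mh: "\<And>i. i \<in> Out \<Longrightarrow> mat_adjoint (M i) = M i"
    using Mpsd unfolding psd_def hermitian_def by auto
  have Rc: "\<rho> \<in> carrier_mat n n" and Rh: "mat_adjoint \<rho> = \<rho>" and Rt: "mtrace \<rho> = 1" and Rp: "psd n \<rho>"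
    using R unfolding density_def psd_def hermitian_def by auto
  have Sc: "\<sigma> \<in> carrier_mat n n" and Sh: "mat_adjoint \<sigma> = \<sigma>" and St: "mtrace \<sigma> = 1" and Sp: "psd n \<sigma>"
    using S unfolding density_def psd_def hermitian_def by auto
  define a where "a i = Re (mtrace (M i * \<rho>)) - Re (mtrace (M i * \<sigma>))" for i
  have cm: "\<And>i. i \<in> Out \<Longrightarrow> cmod (mtrace (M i * (\<rho> - \<sigma>))) = \<bar>a i\<bar>"
  proof -
    fix i assume i: "i \<in> Out"
    have r1: "mtrace (M i * \<rho>) = complex_of_real (Re (mtrace (M i * \<rho>)))"
      by (rule real_of_cnj, rule mtrace_real[OF Mc[OF i] Rc Mh[OF i] Rh])
    have r2: "mtrace (M i * \<sigma>) = complex_of_real (Re (mtrace (M i * \<sigma>)))"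
      by (rule real_of_cnj, rule mtrace_real[OF Mc[OF i] Sc Mh[OF i] Sh])
    have "mtrace (M i * (\<rho> - \<sigma>)) = mtrace (M i * \<rho>) - mtrace (M i * \<sigma>)"
      by (rule mtrace_mult_minus[OF Mc[OF i] Rc Sc])
    also have "\<dots> = complex_of_real (a i)" unfolding a_def by (subst r1, subst r2) simp
    finally show "cmod (mtrace (M i * (\<rho> - \<sigma>))) = \<bar>a i\<bar>" by simp
  qed
  have sumA: "\<And>A. A \<subseteq> Out \<Longrightarrow> (\<Sum>i\<in>A. a i) = Re (mtrace (msum n M A * \<rho>)) - Re (mtrace (msum n M A * \<sigma>))"
  proof -
    fix A assume A: "A \<subseteq> Out"
    then have finA: "finite A" using fin finite_subset by auto
    have MA: "\<And>i. i \<in> A \<Longrightarrow> M i \<in> carrier_mat n n" using Mc A by blast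
    have "Re (mtrace (msum n M A * \<rho>)) = (\<Sum>i\<in>A. Re (mtrace (M i * \<rho>)))"
      using mtrace_msum[OF finA MA Rc] by (simp add: Re_sum)
    moreover have "Re (mtrace (msum n M A * \<sigma>)) = (\<Sum>i\<in>A. Re (mtrace (M i * \<sigma>)))"
      using mtrace_msum[OF finA MA Sc] by (simp add: Re_sum)
    ultimately show "(\<Sum>i\<in>A. a i) = Re (mtrace (msum n M A * \<rho>)) - Re (mtrace (msum n M A * \<sigma>))"
      unfolding a_def by (simp add: sum_subtractf)
  qed
  have tot: "(\<Sum>i\<in>Out. a i) = 0"
    using sumA[of Out] Msum Rc Sc Rt St by simp
  have split: "\<And>A. A \<subseteq> Out \<Longrightarrow> (\<Sum>i\<in>Out. a i) = (\<Sum>i\<in>A. a i) + (\<Sum>i\<in>Out - A. a i)"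
    using fin by (metis sum.subset_diff add.commute)
  have sabs: "(\<Sum>i\<in>Out. cmod (mtrace (M i * (\<rho> - \<sigma>)))) = (\<Sum>i\<in>Out. \<bar>a i\<bar>)"
    using cm by (rule sum.cong[OF refl])
  have herm: "\<And>A. A \<subseteq> Out \<Longrightarrow> mat_adjoint (msum n M A) = msum n M A"
    using Mc Mh by (intro msum_herm) auto
  show "\<And>A. A \<subseteq> Out \<Longrightarrow> 2 * (Re (mtrace (msum n M A * \<rho>)) - Re (mtrace (msum n M A * \<sigma>)))
           \<le> (\<Sum>i\<in>Out. cmod (mtrace (M i * (\<rho> - \<sigma>))))"
  proof -
    fix A assume A: "A \<subseteq> Out"
    have "(\<Sum>i\<in>A. a i) \<le> (\<Sum>i\<in>A. \<bar>a i\<bar>)" by (intro sum_mono) simp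
    moreover have "- (\<Sum>i\<in>Out - A. a i) \<le> (\<Sum>i\<in>Out - A. \<bar>a i\<bar>)"
      by (simp add: sum_negf[symmetric] sum_mono del: sum_negf)
    moreover have "(\<Sum>i\<in>Out. \<bar>a i\<bar>) = (\<Sum>i\<in>A. \<bar>a i\<bar>) + (\<Sum>i\<in>Out - A. \<bar>a i\<bar>)"
      using fin A by (metis sum.subset_diff add.commute)
    ultimately show "2 * (Re (mtrace (msum n M A * \<rho>)) - Re (mtrace (msum n M A * \<sigma>)))
           \<le> (\<Sum>i\<in>Out. cmod (mtrace (M i * (\<rho> - \<sigma>))))"
      unfolding sabs sumA[OF A, symmetric] using tot split[OF A] by linarith
  qed
  define A0 where "A0 = {i \<in> Out. a i \<ge> 0}"
  have A0: "A0 \<subseteq> Out" unfolding A0_def by auto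
  have "(\<Sum>i\<in>A0. \<bar>a i\<bar>) = (\<Sum>i\<in>A0. a i)" unfolding A0_def by (intro sum.cong) auto
  moreover have "(\<Sum>i\<in>Out - A0. \<bar>a i\<bar>) = - (\<Sum>i\<in>Out - A0. a i)"
    unfolding A0_def by (simp add: sum_negf[symmetric] del: sum_negf) (intro sum.cong, auto)
  moreover have "(\<Sum>i\<in>Out. \<bar>a i\<bar>) = (\<Sum>i\<in>A0. \<bar>a i\<bar>) + (\<Sum>i\<in>Out - A0. \<bar>a i\<bar>)"
    using fin A0 by (metis sum.subset_diff add.commute)
  ultimately have abs2: "(\<Sum>i\<in>Out. \<bar>a i\<bar>) = 2 * (\<Sum>i\<in>A0. a i)"
    using tot split[OF A0] by linarith
  have MA0: "msum n M A0 \<in> carrier_mat n n" by simp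
  from herm_eig(2)[OF MA0 herm[OF A0] n Rp Rt] herm_eig(2)[OF MA0 herm[OF A0] n Sp St]
  have "(\<Sum>i\<in>A0. a i) \<le> lambda_max (msum n M A0) - lambda_min (msum n M A0)"
    unfolding sumA[OF A0] by linarith
  also have "\<dots> \<le> Max ((\<lambda>A. lambda_max (msum n M A) - lambda_min (msum n M A)) ` Pow Out)"
    using fin A0 by (intro Max_ge) auto
  finally show "(\<Sum>i\<in>Out. cmod (mtrace (M i * (\<rho> - \<sigma>))))
           \<le> 2 * Max ((\<lambda>A. lambda_max (msum n M A) - lambda_min (msum n M A)) ` Pow Out)"
    unfolding sabs abs2 by simp
qed


lemma unit_density:
  assumes n: "n \<ge> 1"
  shows "density n (proj (unit_vec n 0))"
proof -
  have "(unit_vec n 0 :: complex vec) \<bullet>c unit_vec n 0 = (\<Sum>i<n. if i = 0 then 1 else 0)"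
    unfolding cscalar_alt by (intro sum.cong) (use n in auto)
  also have "\<dots> = 1" using n by simp
  finally show ?thesis by (intro proj_density) simp_all
qed

theorem mainTheorem8:
  fixes n :: nat and Out :: "'i set" and M :: "'i \<Rightarrow> complex mat"
  assumes "n \<ge> 2" and "povm n Out M"
  shows "Kstar n Out M =
           Max ((\<lambda>A. lambda_max (msum n M A) - lambda_min (msum n M A)) ` Pow Out)
    \<and> (\<forall>Astar \<psi> \<phi>.
          Astar \<subseteq> Out
        \<and> (\<forall>A. A \<subseteq> Out \<longrightarrow>
              lambda_max (msum n M A) - lambda_min (msum n M A)
                \<le> lambda_max (msum n M Astar) - lambda_min (msum n M Astar))
        \<and> \<psi> \<in> carrier_vec n \<and> \<phi> \<in> carrier_vec n
        \<and> \<psi> \<bullet>c \<psi> = 1 \<and> \<phi> \<bullet>c \<phi> = 1 \<and> \<psi> \<bullet>c \<phi> = 0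
        \<and> eigenvector (msum n M Astar) \<psi> (complex_of_real (lambda_max (msum n M Astar)))
        \<and> eigenvector (msum n M Astar) \<phi> (complex_of_real (lambda_min (msum n M Astar)))
        \<longrightarrow> 2 * Kstar n Out M =
              (\<Sum>i\<in>Out. cmod (mtrace (M i * (proj \<psi> - proj \<phi>)))))"
proof -
  have n: "n \<ge> 1" using assms(1) by simp
  have P: "povm n Out M" by fact
  have fin: "finite Out" and Mpsd: "\<And>i. i \<in> Out \<Longrightarrow> psd n (M i)"
    using P unfolding povm_def by auto
  have Mc: "\<And>i. i \<in> Out \<Longrightarrow> M i \<in> carrier_mat n n" and Mh: "\<And>i. i \<in> Out \<Longrightarrow> mat_adjoint (M i) = M i"
    using Mpsd unfolding psd_def hermitian_def by auto
  have herm: "\<And>A. A \<subseteq> Out \<Longrightarrow> mat_adjoint (msum n M A) = msum n M A"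
    using Mc Mh by (intro msum_herm) auto
  define G where "G A = lambda_max (msum n M A) - lambda_min (msum n M A)" for A
  define Mx where "Mx = Max (G ` Pow Out)"
  define F where "F \<rho> \<sigma> = (\<Sum>i\<in>Out. cmod (mtrace (M i * (\<rho> - \<sigma>))))" for \<rho> \<sigma>
  define K where "K = {(1/2) * F \<rho> \<sigma> | \<rho> \<sigma>. density n \<rho> \<and> density n \<sigma>}"
  have KS: "Kstar n Out M = Sup K" unfolding Kstar_def K_def F_def ..
  have up: "\<And>x. x \<in> K \<Longrightarrow> x \<le> Mx"
  proof -
    fix x assume "x \<in> K"
    then obtain \<rho> \<sigma> where x: "x = (1/2) * F \<rho> \<sigma>" and R: "density n \<rho>" and S: "density n \<sigma>"
      unfolding K_def by blast
    show "x \<le> Mx" using povm_key(1)[OF P n R S] unfolding x F_def Mx_def G_def by simp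
  qed
  have ne: "K \<noteq> {}" using unit_density[OF n] unfolding K_def by blast
  have bdd: "bdd_above K" using up by (intro bdd_aboveI) blast
  have Kle: "Sup K \<le> Mx" using ne up by (rule cSup_least)
  have lower: "\<And>A \<psi> \<phi>. A \<subseteq> Out \<Longrightarrow> \<psi> \<in> carrier_vec n \<Longrightarrow> \<phi> \<in> carrier_vec n \<Longrightarrow>
      \<psi> \<bullet>c \<psi> = 1 \<Longrightarrow> \<phi> \<bullet>c \<phi> = 1 \<Longrightarrow>
      eigenvector (msum n M A) \<psi> (complex_of_real (lambda_max (msum n M A))) \<Longrightarrow>
      eigenvector (msum n M A) \<phi> (complex_of_real (lambda_min (msum n M A))) \<Longrightarrow>
      2 * G A \<le> F (proj \<psi>) (proj \<phi>) \<and> F (proj \<psi>) (proj \<phi>) \<le> 2 * Sup K"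
  proof -
    fix A \<psi> \<phi> assume A: "A \<subseteq> Out" and psi: "\<psi> \<in> carrier_vec n" and phi: "\<phi> \<in> carrier_vec n"
      and n1: "\<psi> \<bullet>c \<psi> = 1" and n2: "\<phi> \<bullet>c \<phi> = 1"
      and e1: "eigenvector (msum n M A) \<psi> (complex_of_real (lambda_max (msum n M A)))"
      and e2: "eigenvector (msum n M A) \<phi> (complex_of_real (lambda_min (msum n M A)))"
    have R: "density n (proj \<psi>)" by (rule proj_density[OF psi n1])
    have S: "density n (proj \<phi>)" by (rule proj_density[OF phi n2])
    have t1: "mtrace (msum n M A * proj \<psi>) = complex_of_real (lambda_max (msum n M A))"
      by (rule eig_trace[OF msum_carrier e1 n1])
    have t2: "mtrace (msum n M A * proj \<phi>) = complex_of_real (lambda_min (msum n M A))"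
      by (rule eig_trace[OF msum_carrier e2 n2])
    have "2 * G A \<le> F (proj \<psi>) (proj \<phi>)"
      using povm_key(2)[OF P n R S A] unfolding t1 t2 G_def F_def by simp
    moreover have "(1/2) * F (proj \<psi>) (proj \<phi>) \<le> Sup K"
      using R S unfolding K_def by (intro cSup_upper bdd[unfolded K_def]) blast
    ultimately show "2 * G A \<le> F (proj \<psi>) (proj \<phi>) \<and> F (proj \<psi>) (proj \<phi>) \<le> 2 * Sup K"
      by simp
  qed
  obtain As where As: "As \<in> Pow Out" and GAs: "G As = Mx"
    unfolding Mx_def using fin by (metis (no_types, lifting) Max_in empty_iff finite_Pow_iff finite_imageI image_iff image_is_empty Pow_bottom)
  have AsO: "As \<subseteq> Out" using As by simp
  have MAs: "msum n M As \<in> carrier_mat n n" by simp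
  define SE where "SE = {x. eigenvalue (msum n M As) (complex_of_real x)}"
  have SEf: "finite SE" unfolding SE_def by (rule eig_finite[OF MAs])
  have SEne: "SE \<noteq> {}" unfolding SE_def by (rule herm_eig(1)[OF MAs herm[OF AsO] n])
  have "lambda_max (msum n M As) \<in> SE" unfolding lambda_max_def SE_def[symmetric] using SEf SEne by (rule Max_in)
  then obtain \<psi> where psi: "\<psi> \<in> carrier_vec n" "\<psi> \<bullet>c \<psi> = 1"
      "eigenvector (msum n M As) \<psi> (complex_of_real (lambda_max (msum n M As)))"
    unfolding SE_def using eig_unit[OF MAs] by blast
  have "lambda_min (msum n M As) \<in> SE" unfolding lambda_min_def SE_def[symmetric] using SEf SEne by (rule Min_in)
  then obtain \<phi> where phi: "\<phi> \<in> carrier_vec n" "\<phi> \<bullet>c \<phi> = 1"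
      "eigenvector (msum n M As) \<phi> (complex_of_real (lambda_min (msum n M As)))"
    unfolding SE_def using eig_unit[OF MAs] by blast
  have "Mx \<le> Sup K" using lower[OF AsO psi(1) phi(1) psi(2) phi(2) psi(3) phi(3)] GAs by simp
  with Kle have KM: "Sup K = Mx" by simp
  show ?thesis
  proof (intro conjI allI impI)
    show "Kstar n Out M = Max ((\<lambda>A. lambda_max (msum n M A) - lambda_min (msum n M A)) ` Pow Out)"
      using KS KM unfolding Mx_def G_def by simp
  next
    fix Astar \<psi> \<phi>
    assume H: "Astar \<subseteq> Out
        \<and> (\<forall>A. A \<subseteq> Out \<longrightarrow>
              lambda_max (msum n M A) - lambda_min (msum n M A)
                \<le> lambda_max (msum n M Astar) - lambda_min (msum n M Astar))
        \<and> \<psi> \<in> carrier_vec n \<and> \<phi> \<in> carrier_vec n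
        \<and> \<psi> \<bullet>c \<psi> = 1 \<and> \<phi> \<bullet>c \<phi> = 1 \<and> \<psi> \<bullet>c \<phi> = 0
        \<and> eigenvector (msum n M Astar) \<psi> (complex_of_real (lambda_max (msum n M Astar)))
        \<and> eigenvector (msum n M Astar) \<phi> (complex_of_real (lambda_min (msum n M Astar)))"
    then have A: "Astar \<subseteq> Out" and opt: "\<And>A. A \<subseteq> Out \<Longrightarrow> G A \<le> G Astar" unfolding G_def by auto
    from H have L: "2 * G Astar \<le> F (proj \<psi>) (proj \<phi>) \<and> F (proj \<psi>) (proj \<phi>) \<le> 2 * Sup K"
      by (intro lower) auto
    have "Mx \<le> G Astar" unfolding Mx_def using fin opt by (subst Max_le_iff) auto
    then have "F (proj \<psi>) (proj \<phi>) = 2 * Sup K" using L KM by linarith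
    then show "2 * Kstar n Out M = (\<Sum>i\<in>Out. cmod (mtrace (M i * (proj \<psi> - proj \<phi>))))"
      unfolding KS F_def by simp
  qed
qed

end
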